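(* Let $T$ be a countable tree with root $o$, and let $Q=(q(x,y))$ be a stochastic matrix on $T$ with $q(x,y)>0$ iff $x=y^-$. Let $\lambda\in\mathbb{C}\setminus\{0\}$. The formula $$h(x)=\int_{\partial T}K_Q(x,\xi\mid\lambda)\,d\sigma(\xi)=\frac{\lambda^{|x|}}{q^{(|x|)}(o,x)}\,\sigma(\partial T_x),\qquad x\in T,$$ gives a one-to-one correspondence $\sigma\mapsto h$ between complex distributions $\sigma$ on $\{\partial T_x:x\in T\}$ and $\lambda$-harmonic functions $h$ for $Q$, i.e. functions $h:T\to\mathbb{C}$ with $\sum_{y:\,y^-=x}q(x,y)h(y)=\lambda h(x)$ for all $x$, the sum converging absolutely.
   Context: $|x|=d(o,x)$. For $x\ne o$, $x^-$ is the neighbour of $x$ closer to $o$. $T_x=\{w:x\in\pi(o,w)\}$, where $\pi$ denotes geodesics, with $T_o=T$. $\partial T$ is the set of ends (classes of geodesic rays modulo finite initial segments), and $\partial T_x$ is the set of ends with a representative ray in $T_x$. For $\pi(o,x)=[o=x_0,\dots,x_n=x]$, $q^{(n)}(o,x)=q(x_0,x_1)\cdots q(x_{n-1},x_n)$, with $q^{(0)}(o,o)=1$. $K_Q(x,\xi\mid\lambda)=\lambda^{|x|}/q^{(|x|)}(o,x)$ if $x$ lies on the ray $\pi(o,\xi)$, and $0$ otherwise. A complex distribution is $\sigma:\{\partial T_x\}\to\mathbb{C}$ with $\sigma(\partial T_x)=\sum_{y^-=x}\sigma(\partial T_y)$ for all $x$, absolutely convergent. The integral of a function constant on $\partial T_x$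 and $0$ off $\partial T_x$ is that constant times $\sigma(\partial T_x)$. *)

theory Defs
  imports "HOL-Analysis.Analysis"
begin

text \<open>A rooted tree on the (countable) vertex type 'a is given by its root o and the
  predecessor map par (par x = x^- for x \<noteq> o, and by convention par r = r).\<close>

definition rooted_tree :: "'a \<Rightarrow> ('a \<Rightarrow> 'a) \<Rightarrow> bool" where
  "rooted_tree r par \<longleftrightarrow> par r = r \<and> (\<forall>x. \<exists>n. (par ^^ n) x = r)"

definition children :: "'a \<Rightarrow> ('a \<Rightarrow> 'a) \<Rightarrow> 'a \<Rightarrow> 'a set" where
  "children r par x = {y. y \<noteq> r \<and> par y = x}"

definition depth :: "'a \<Rightarrow> ('a \<Rightarrow> 'a) \<Rightarrow> 'a \<Rightarrow> nat" where
  "depth r par x = (LEAST n. (par ^^ n) x = r)"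

definition qpath :: "'a \<Rightarrow> ('a \<Rightarrow> 'a) \<Rightarrow> ('a \<Rightarrow> 'a \<Rightarrow> real) \<Rightarrow> 'a \<Rightarrow> real" where
  "qpath r par q x = (\<Prod>k<depth r par x. q ((par ^^ Suc k) x) ((par ^^ k) x))"

definition nn_transition :: "'a \<Rightarrow> ('a \<Rightarrow> 'a) \<Rightarrow> ('a \<Rightarrow> 'a \<Rightarrow> real) \<Rightarrow> bool" where
  "nn_transition r par q \<longleftrightarrow>
     (\<forall>x y. q x y \<ge> 0) \<and> (\<forall>x. (q x has_sum 1) UNIV) \<and>
     (\<forall>x y. q x y > 0 \<longleftrightarrow> y \<in> children r par x)"

text \<open>Complex distribution: sigma x stands for sigma(\<partial>T_x).\<close>
definition complex_distribution :: "'a \<Rightarrow> ('a \<Rightarrow> 'a) \<Rightarrow> ('a \<Rightarrow> complex) \<Rightarrow> bool" where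
  "complex_distribution r par \<sigma> \<longleftrightarrow>
     (\<forall>x. (\<lambda>y. norm (\<sigma> y)) summable_on children r par x \<and> (\<sigma> has_sum \<sigma> x) (children r par x))"

definition lambda_harmonic ::
  "'a \<Rightarrow> ('a \<Rightarrow> 'a) \<Rightarrow> ('a \<Rightarrow> 'a \<Rightarrow> real) \<Rightarrow> complex \<Rightarrow> ('a \<Rightarrow> complex) \<Rightarrow> bool" where
  "lambda_harmonic r par q lam h \<longleftrightarrow>
     (\<forall>x. (\<lambda>y. norm (complex_of_real (q x y) * h y)) summable_on children r par x \<and>
          ((\<lambda>y. complex_of_real (q x y) * h y) has_sum lam * h x) (children r par x))"

text \<open>K_Q(x,\<xi>|lambda) for \<xi> \<in> \<partial>T_x: lambda^|x| / q^(|x|)(o,x); integrating against sigma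
  gives this constant times sigma(\<partial>T_x).\<close>
definition KQ_const :: "'a \<Rightarrow> ('a \<Rightarrow> 'a) \<Rightarrow> ('a \<Rightarrow> 'a \<Rightarrow> real) \<Rightarrow> complex \<Rightarrow> 'a \<Rightarrow> complex" where
  "KQ_const r par q lam x = lam ^ depth r par x / complex_of_real (qpath r par q x)"

definition poisson_transform ::
  "'a \<Rightarrow> ('a \<Rightarrow> 'a) \<Rightarrow> ('a \<Rightarrow> 'a \<Rightarrow> real) \<Rightarrow> complex \<Rightarrow> ('a \<Rightarrow> complex) \<Rightarrow> 'a \<Rightarrow> complex" where
  "poisson_transform r par q lam \<sigma> x = KQ_const r par q lam x * \<sigma> x"

end

theory Submission
  imports Defs
begin

lemma depth_child:
  assumes rt: "rooted_tree r par" and y: "y \<noteq> r" "par y = x"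
  shows "depth r par y = Suc (depth r par x)"
proof -
  from rt obtain n where n: "(par ^^ n) y = r" unfolding rooted_tree_def by blast
  have "(LEAST n. (par ^^ n) y = r) = Suc (LEAST m. (par ^^ Suc m) y = r)"
    by (rule Least_Suc[where P="\<lambda>n. (par ^^ n) y = r", OF n]) (use y in simp)
  also have "(\<lambda>m. (par ^^ Suc m) y = r) = (\<lambda>m. (par ^^ m) x = r)"
    using y by (simp add: funpow_Suc_right del: funpow.simps)
  finally show ?thesis unfolding depth_def by simp
qed

lemma qpath_child:
  assumes rt: "rooted_tree r par" and y: "y \<noteq> r" "par y = x"
  shows "qpath r par q y = q x y * qpath r par q x"
  unfolding qpath_def depth_child[OF rt y] prod.lessThan_Suc_shift
  using y by (simp add: funpow_Suc_right del: funpow.simps)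

lemma qpath_pos:
  assumes rt: "rooted_tree r par" and nt: "nn_transition r par q"
  shows "qpath r par q x > 0"
  unfolding qpath_def
proof (rule prod_pos)
  fix k assume "k \<in> {..<depth r par x}"
  hence "k < (LEAST n. (par ^^ n) x = r)" by (simp add: depth_def)
  hence "(par ^^ k) x \<noteq> r" by (rule not_less_Least)
  hence "(par ^^ k) x \<in> children r par ((par ^^ Suc k) x)"
    by (simp add: children_def)
  thus "q ((par ^^ Suc k) x) ((par ^^ k) x) > 0"
    using nt unfolding nn_transition_def by blast
qed

lemma KQ_nz:
  assumes rt: "rooted_tree r par" and nt: "nn_transition r par q" and lam: "lam \<noteq> 0"
  shows "KQ_const r par q lam x \<noteq> 0"
  using qpath_pos[OF rt nt, of x] lam by (simp add: KQ_const_def)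

lemma KQ_child:
  assumes rt: "rooted_tree r par" and nt: "nn_transition r par q"
    and y: "y \<in> children r par x"
  shows "complex_of_real (q x y) * KQ_const r par q lam y = lam * KQ_const r par q lam x"
proof -
  have yy: "y \<noteq> r" "par y = x" using y by (auto simp: children_def)
  have qp: "q x y > 0" using nt y unfolding nn_transition_def by blast
  have pp: "qpath r par q x > 0" by (rule qpath_pos[OF rt nt])
  show ?thesis
    unfolding KQ_const_def depth_child[OF rt yy] qpath_child[OF rt yy]
    using qp pp by (simp add: field_simps)
qed

lemma main_iff:
  assumes rt: "rooted_tree r par" and nt: "nn_transition r par q" and lam: "lam \<noteq> 0"
  shows "complex_distribution r par \<sigma> \<longleftrightarrow>
         lambda_harmonic r par q lam (\<lambda>x. KQ_const r par q lam x * \<sigma> x)"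
proof -
  let ?K = "KQ_const r par q lam"
  have "((\<lambda>y. norm (complex_of_real (q x y) * (?K y * \<sigma> y))) summable_on children r par x
         \<and> ((\<lambda>y. complex_of_real (q x y) * (?K y * \<sigma> y)) has_sum lam * (?K x * \<sigma> x)) (children r par x))
        \<longleftrightarrow> ((\<lambda>y. norm (\<sigma> y)) summable_on children r par x \<and> (\<sigma> has_sum \<sigma> x) (children r par x))"
    for x
  proof -
    have c: "lam * ?K x \<noteq> 0" using lam KQ_nz[OF rt nt lam] by simp
    have e: "complex_of_real (q x y) * (?K y * \<sigma> y) = (lam * ?K x) * \<sigma> y"
      if "y \<in> children r par x" for y
      using KQ_child[OF rt nt that, of lam] by (simp add: mult.assoc[symmetric])
    have s1: "(\<lambda>y. norm (complex_of_real (q x y) * (?K y * \<sigma> y))) summable_on children r par x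
        \<longleftrightarrow> (\<lambda>y. norm (lam * ?K x) * norm (\<sigma> y)) summable_on children r par x"
      by (rule summable_on_cong) (simp add: e norm_mult)
    have s2: "((\<lambda>y. complex_of_real (q x y) * (?K y * \<sigma> y)) has_sum lam * (?K x * \<sigma> x)) (children r par x)
        \<longleftrightarrow> ((\<lambda>y. (lam * ?K x) * \<sigma> y) has_sum lam * (?K x * \<sigma> x)) (children r par x)"
      by (rule has_sum_cong) (simp add: e)
    have c2: "norm (lam * ?K x) \<noteq> 0" using c by simp
    show ?thesis
      unfolding s1 s2 summable_on_cmult_right'[OF c2] has_sum_cmult_right_iff[OF c]
      using c by (simp add: mult.assoc)
  qed
  thus ?thesis unfolding complex_distribution_def lambda_harmonic_def by simp
qed

theorem lemma6p1:
  fixes r :: "'a::countable" and par :: "'a \<Rightarrow> 'a"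
    and q :: "'a \<Rightarrow> 'a \<Rightarrow> real" and lam :: complex
  assumes "rooted_tree r par"
    and "nn_transition r par q"
    and "lam \<noteq> 0"
  shows "bij_betw (poisson_transform r par q lam)
           {\<sigma>. complex_distribution r par \<sigma>}
           {h. lambda_harmonic r par q lam h}"
proof -
  let ?K = "KQ_const r par q lam"
  have nz: "\<And>x. ?K x \<noteq> 0" by (rule KQ_nz[OF assms])
  have pt: "poisson_transform r par q lam \<sigma> = (\<lambda>x. ?K x * \<sigma> x)" for \<sigma>
    by (simp add: poisson_transform_def fun_eq_iff)
  show ?thesis
  proof (rule bij_betw_byWitness[where f' = "\<lambda>h x. h x / ?K x"])
    show "\<forall>a\<in>{\<sigma>. complex_distribution r par \<sigma>}.
            (\<lambda>x. poisson_transform r par q lam a x / ?K x) = a"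
      using nz by (simp add: pt)
    show "\<forall>a'\<in>{h. lambda_harmonic r par q lam h}.
            poisson_transform r par q lam (\<lambda>x. a' x / ?K x) = a'"
      using nz by (simp add: pt)
    show "poisson_transform r par q lam ` {\<sigma>. complex_distribution r par \<sigma>}
          \<subseteq> {h. lambda_harmonic r par q lam h}"
      using main_iff[OF assms] by (auto simp: pt)
    show "(\<lambda>h x. h x / ?K x) ` {h. lambda_harmonic r par q lam h}
          \<subseteq> {\<sigma>. complex_distribution r par \<sigma>}"
    proof safe
      fix h assume "lambda_harmonic r par q lam h"
      moreover have "(\<lambda>x. ?K x * (h x / ?K x)) = h" using nz by (simp add: fun_eq_iff)
      ultimately show "complex_distribution r par (\<lambda>x. h x / ?K x)"
        using main_iff[OF assms, of "\<lambda>x. h x / ?K x"] by simp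
    qed
  qed
qed

end
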